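(* Let $t$ and $l$ be positive integers with $l\ge 6$. There exists $k_0=k_0(t,l)$ such that for every $k\ge k_0$, whenever the edge set of $\widetilde O_{k+1}$ is partitioned into $t$ parts, the subgraph formed by one of the parts contains a cycle of length $2l$.
   Context: For positive integers $n\ge k+1$, the doubled Johnson graph $J(n;k,k+1)$ is the bipartite graph with vertex set $\binom{[n]}{k}\cup\binom{[n]}{k+1}$ (subsets of $[n]=\{1,\dots,n\}$), where two vertices $u,v$ are adjacent iff $u\subset v$ or $v\subset u$. The doubled Odd graph is $\widetilde O_{k+1}=J(2k+1;k,k+1)$. *)

theory Defs
  imports Main
begin

definition dj_vertices :: "nat \<Rightarrow> nat \<Rightarrow> nat set set" where
  "dj_vertices n k = {A. A \<subseteq> {1..n} \<and> (card A = k \<or> card A = k + 1)}"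

definition dj_edges :: "nat \<Rightarrow> nat \<Rightarrow> nat set set set" where
  "dj_edges n k = {{A, B} | A B. A \<subseteq> {1..n} \<and> B \<subseteq> {1..n} \<and>
                      card A = k \<and> card B = k + 1 \<and> A \<subset> B}"

text \<open>Doubled Odd graph O~_{k+1} = J(2k+1;k,k+1).\<close>
definition doubled_odd_edges :: "nat \<Rightarrow> nat set set set" where
  "doubled_odd_edges k = dj_edges (2 * k + 1) k"

definition has_cycle_of_length :: "'a set set \<Rightarrow> nat \<Rightarrow> bool" where
  "has_cycle_of_length F m \<longleftrightarrow> m \<ge> 3 \<and>
     (\<exists>vs. length vs = m \<and> distinct vs \<and>
        (\<forall>i<m. {vs ! i, vs ! ((i + 1) mod m)} \<in> F))"

end

theory Submission imports Defs "HOL-Library.Ramsey" begin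


datatype V = T nat nat nat | PXY nat nat | PXW nat nat | PYW nat nat

definition adjV :: "V \<Rightarrow> V \<Rightarrow> bool" where
  "adjV u v \<longleftrightarrow> (\<exists>x y w. (u = T x y w \<and> (v = PXY x y \<or> v = PXW x w \<or> v = PYW y w))
                        \<or> (v = T x y w \<and> (u = PXY x y \<or> u = PXW x w \<or> u = PYW y w)))"

fun bnd :: "nat \<Rightarrow> V \<Rightarrow> bool" where
  "bnd K (T x y w) = (x < K \<and> y < K \<and> w < K)"
| "bnd K (PXY x y) = (x < K \<and> y < K)"
| "bnd K (PXW x w) = (x < K \<and> w < K)"
| "bnd K (PYW y w) = (y < K \<and> w < K)"

definition xe :: "nat \<Rightarrow> nat" where "xe j = (if even j then j else j - 1)"
definition ye :: "nat \<Rightarrow> nat" where "ye j = (if even j then j - 1 else j)"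
definition av :: "nat \<Rightarrow> V" where "av j = (if even j then PXW j 0 else PYW j 0)"

definition cyc :: "nat \<Rightarrow> nat \<Rightarrow> V" where
  "cyc p i = (if i = 0 then PXY 0 1
    else if i < 2*p then (if odd i then T (xe ((i+1) div 2)) (ye ((i+1) div 2)) 0 else av (i div 2))
    else if i = 2*p then PXY (xe p) (ye p)
    else if i = 2*p+1 then T (xe p) (ye p) 1
    else if i = 2*p+2 then PXW (xe p) 1
    else if i = 2*p+3 then T (xe p) 1 1
    else if i = 2*p+4 then PYW 1 1
    else T 0 1 1)"

fun pos :: "nat \<Rightarrow> V \<Rightarrow> nat" where
  "pos p (PXY x y) = (if x = 0 \<and> y = 1 then 0 else 2*p)"
| "pos p (T x y w) = (if w = 0 then 2*max x y - 1 else if y = 1 then (if x = 0 then 2*p+5 else 2*p+3) else 2*p+1)"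
| "pos p (PXW x w) = (if w = 0 then 2*x else 2*p+2)"
| "pos p (PYW y w) = (if w = 0 then 2*y else 2*p+4)"

lemma max_xe_ye: "j \<ge> 1 \<Longrightarrow> max (xe j) (ye j) = j"
  by (auto simp: xe_def ye_def)

lemma pos_cyc: assumes "p \<ge> 3" "i < 2*p+6" shows "pos p (cyc p i) = i"
proof -
  have xp: "xe p \<noteq> 0" "ye p \<noteq> 1" "xe p \<le> p" "ye p \<le> p" using assms(1) by (auto simp: xe_def ye_def)
  consider "i = 0" | "0 < i \<and> i < 2*p \<and> odd i" | "0 < i \<and> i < 2*p \<and> even i" | "i \<ge> 2*p" by linarith
  then show ?thesis
  proof cases
    case 2
    then have "(i+1) div 2 \<ge> 1" by auto
    then show ?thesis using 2 max_xe_ye[of "(i+1) div 2"] by (auto simp: cyc_def)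
  next
    case 3
    then show ?thesis by (auto simp: cyc_def av_def)
  next
    case 4
    then have "i = 2*p \<or> i = 2*p+1 \<or> i = 2*p+2 \<or> i = 2*p+3 \<or> i = 2*p+4 \<or> i = 2*p+5" using assms by linarith
    then show ?thesis using xp assms by (elim disjE; simp add: cyc_def)
  qed (simp add: cyc_def)
qed

lemma inj_cyc: assumes "p \<ge> 3" shows "inj_on (cyc p) {..<2*p+6}"
  by (rule inj_on_inverseI[where g = "pos p"]) (use pos_cyc assms in auto)

lemma bnd_cyc: assumes "p \<ge> 3" shows "bnd (p+3) (cyc p i)"
  using assms by (auto simp: cyc_def xe_def ye_def av_def)

lemma adj_cyc: assumes "p \<ge> 3" "i < 2*p+6" shows "adjV (cyc p i) (cyc p ((i+1) mod (2*p+6)))"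
proof -
  consider "i = 0" | "0 < i \<and> i < 2*p \<and> odd i" | "0 < i \<and> i < 2*p \<and> even i" | "i \<ge> 2*p" by linarith
  then show ?thesis
  proof cases
    case 1
    then show ?thesis using assms by (auto simp: cyc_def adjV_def xe_def ye_def)
  next
    case 2
    define j where "j = (i+1) div 2"
    have j: "i = 2*j - 1" "j \<ge> 1" "j \<le> p" using 2 unfolding j_def by (auto elim: oddE)
    have m: "(i+1) mod (2*p+6) = 2*j" using j by simp
    have c1: "cyc p i = T (xe j) (ye j) 0" using j 2 by (simp add: cyc_def)
    show ?thesis
    proof (cases "j = p")
      case True
      then show ?thesis using m c1 j by (simp add: cyc_def adjV_def)
    next
      case False
      then have "cyc p (2*j) = av j" using j by (simp add: cyc_def)
      then show ?thesis using m c1 j by (auto simp: adjV_def av_def xe_def ye_def)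
    qed
  next
    case 3
    define j where "j = i div 2"
    have j: "i = 2*j" "j \<ge> 1" "j < p" using 3 unfolding j_def by (auto elim: evenE)
    have m: "(i+1) mod (2*p+6) = 2*j+1" using j by simp
    have c1: "cyc p i = av j" using j 3 by (simp add: cyc_def)
    have c2: "cyc p (2*j+1) = T (xe (j+1)) (ye (j+1)) 0" using j by (simp add: cyc_def)
    show ?thesis using m c1 c2 by (auto simp: adjV_def av_def xe_def ye_def)
  next
    case 4
    then have "i = 2*p \<or> i = 2*p+1 \<or> i = 2*p+2 \<or> i = 2*p+3 \<or> i = 2*p+4 \<or> i = 2*p+5" using assms by linarith
    moreover have "(i+1) mod (2*p+6) = (if i = 2*p+5 then 0 else i+1)" using assms by (auto simp: add.commute)
    moreover have xp: "xe p \<noteq> 0" "ye p \<noteq> 1" using assms(1) by (auto simp: xe_def ye_def)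
    ultimately show ?thesis using assms by (elim disjE; simp add: cyc_def adjV_def)
  qed
qed


lemma cycle_transfer:
  assumes "m \<ge> 3" "inj_on g {..<m}" "\<forall>i<m. {g i, g ((i+1) mod m)} \<in> G"
  shows "has_cycle_of_length G m"
  unfolding has_cycle_of_length_def
proof (intro conjI exI[of _ "map g [0..<m]"])
  show "distinct (map g [0..<m])" using assms(2) by (simp add: distinct_map atLeast0LessThan)
  show "\<forall>i<m. {map g [0..<m] ! i, map g [0..<m] ! ((i + 1) mod m)} \<in> G"
  proof (intro allI impI)
    fix i assume "i < m"
    moreover have "(i+1) mod m < m" using assms(1) by simp
    ultimately show "{map g [0..<m] ! i, map g [0..<m] ! ((i + 1) mod m)} \<in> G"
      using assms(3) by simp
  qed
qed (use assms in auto)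

lemma idx_eq: assumes "a*K + b = c*(K::nat) + d" "b < K" "d < K" shows "a = c \<and> b = d"
proof -
  have 1: "(a*K+b) div K = a" "(c*K+d) div K = c" "(a*K+b) mod K = b" "(c*K+d) mod K = d"
    using assms(2,3) by auto
  have "a = c" using 1(1,2) assms(1) by simp
  moreover have "b = d" using 1(3,4) assms(1) by simp
  ultimately show ?thesis by simp
qed

lemma idx_lt: assumes "q < s" "v < K" shows "q*K + v < s*(K::nat)"
proof -
  have "q*K + v < q*K + K" using assms by simp
  also have "\<dots> = (q+1)*K" by simp
  also have "\<dots> \<le> s*K" using assms(1) by (intro mult_right_mono) auto
  finally show ?thesis .
qed

locale emb =
  fixes h :: "nat \<Rightarrow> nat" and K s r1 r2 r3 :: nat and F :: "nat set"
  assumes hinj: "inj_on h {..<s*K}" and Fdisj: "\<And>q. q < s*K \<Longrightarrow> Suc (h q) \<notin> F"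
    and r: "r1 < s" "r2 < s" "r3 < s" "r1 \<noteq> r2" "r1 \<noteq> r3" "r2 \<noteq> r3"
    and Kpos: "K > 0" and finF: "finite F"
begin

definition ofs :: "nat \<Rightarrow> nat \<Rightarrow> nat \<Rightarrow> nat \<Rightarrow> nat" where
  "ofs x y w q = (if q = r1 then x else if q = r2 then y else if q = r3 then w else 0)"

definition bd :: "(nat \<Rightarrow> nat) \<Rightarrow> bool" where "bd f \<longleftrightarrow> (\<forall>q<s. f q < K)"

definition Z :: "(nat \<Rightarrow> nat) \<Rightarrow> nat set \<Rightarrow> nat set" where
  "Z f D = F \<union> (\<lambda>q. Suc (h (q*K + f q))) ` ({..<s} - D)"

lemma bd_ofs: "x < K \<Longrightarrow> y < K \<Longrightarrow> w < K \<Longrightarrow> bd (ofs x y w)"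
  using Kpos by (auto simp: bd_def ofs_def)

lemma helt_eq: assumes "q < s" "v < K" "q' < s" "v' < K" "h (q*K+v) = h (q'*K+v')"
  shows "q = q' \<and> v = v'"
proof -
  have "q*K+v = q'*K+v'"
    using hinj assms idx_lt by (meson inj_onD lessThan_iff)
  then show ?thesis using idx_eq assms by blast
qed

lemma mem_Z: assumes "q < s" "v < K" "bd f"
  shows "Suc (h (q*K+v)) \<in> Z f D \<longleftrightarrow> q \<notin> D \<and> f q = v"
proof
  assume "Suc (h (q*K+v)) \<in> Z f D"
  moreover have "Suc (h (q*K+v)) \<notin> F" using Fdisj idx_lt assms by blast
  ultimately obtain q' where "q' < s" "q' \<notin> D" "h (q*K+v) = h (q'*K + f q')"
    unfolding Z_def by auto
  then show "q \<notin> D \<and> f q = v" using helt_eq[of q v q' "f q'"] assms by (auto simp: bd_def)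
next
  assume "q \<notin> D \<and> f q = v"
  then show "Suc (h (q*K+v)) \<in> Z f D" using assms unfolding Z_def by auto
qed

lemma Z_eqD: assumes "Z f D = Z f' D'" "q < s" "bd f" "bd f'" "q \<notin> D"
  shows "q \<notin> D' \<and> f' q = f q"
proof -
  have "f q < K" using assms by (auto simp: bd_def)
  then have "Suc (h (q*K + f q)) \<in> Z f D" using mem_Z assms by blast
  then have "Suc (h (q*K + f q)) \<in> Z f' D'" using assms by simp
  then show ?thesis using mem_Z assms \<open>f q < K\<close> by blast
qed

lemma Z_cong: "(\<And>q. q < s \<Longrightarrow> q \<notin> D \<Longrightarrow> f q = f' q) \<Longrightarrow> Z f D = Z f' D"
  unfolding Z_def by (auto simp: image_iff)

lemma card_Z: assumes "D \<subseteq> {..<s}" "bd f"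
  shows "card (Z f D) = card F + (s - card D)"
proof -
  have inj: "inj_on (\<lambda>q. Suc (h (q*K + f q))) ({..<s} - D)"
  proof (rule inj_onI)
    fix q q' assume "q \<in> {..<s} - D" "q' \<in> {..<s} - D" "Suc (h (q*K + f q)) = Suc (h (q'*K + f q'))"
    then show "q = q'" using helt_eq[of q "f q" q' "f q'"] assms(2) by (auto simp: bd_def)
  qed
  have "card ((\<lambda>q. Suc (h (q*K + f q))) ` ({..<s} - D)) = s - card D"
    using card_image[OF inj] assms(1) by (simp add: card_Diff_subset finite_subset)
  moreover have "F \<inter> (\<lambda>q. Suc (h (q*K + f q))) ` ({..<s} - D) = {}"
    using Fdisj idx_lt assms(2) by (auto simp: bd_def)
  ultimately show ?thesis unfolding Z_def using finF by (simp add: card_Un_disjoint)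
qed

lemma Z_psubset: assumes "r < s" "bd f" shows "Z f {r} \<subset> Z f {}"
proof -
  have "Z f {r} \<subseteq> Z f {}" unfolding Z_def by auto
  moreover have "Suc (h (r*K + f r)) \<in> Z f {}" "Suc (h (r*K + f r)) \<notin> Z f {r}"
    using mem_Z[of r "f r" f] assms by (auto simp: bd_def)
  ultimately show ?thesis by blast
qed

fun phi :: "V \<Rightarrow> nat set" where
  "phi (T x y w) = Z (ofs x y w) {}"
| "phi (PXY x y) = Z (ofs x y 0) {r3}"
| "phi (PXW x w) = Z (ofs x 0 w) {r2}"
| "phi (PYW y w) = Z (ofs 0 y w) {r1}"

lemma Z_ofs_eq: assumes "Z (ofs x y w) D = Z (ofs x' y' w') D'"
  "x < K" "y < K" "w < K" "x' < K" "y' < K" "w' < K"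
  shows "r1 \<notin> D \<Longrightarrow> r1 \<notin> D' \<and> x' = x" "r2 \<notin> D \<Longrightarrow> r2 \<notin> D' \<and> y' = y"
    "r3 \<notin> D \<Longrightarrow> r3 \<notin> D' \<and> w' = w"
    "r1 \<notin> D' \<Longrightarrow> r1 \<notin> D \<and> x' = x" "r2 \<notin> D' \<Longrightarrow> r2 \<notin> D \<and> y' = y"
    "r3 \<notin> D' \<Longrightarrow> r3 \<notin> D \<and> w' = w"
proof -
  have b: "bd (ofs x y w)" "bd (ofs x' y' w')" using bd_ofs assms by auto
  note D1 = Z_eqD[OF assms(1) _ b]
  note D2 = Z_eqD[OF assms(1)[symmetric] _ b(2) b(1)]
  show "r1 \<notin> D \<Longrightarrow> r1 \<notin> D' \<and> x' = x" using D1[of r1] r by (simp add: ofs_def)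
  show "r2 \<notin> D \<Longrightarrow> r2 \<notin> D' \<and> y' = y" using D1[of r2] r by (simp add: ofs_def)
  show "r3 \<notin> D \<Longrightarrow> r3 \<notin> D' \<and> w' = w" using D1[of r3] r by (simp add: ofs_def)
  show "r1 \<notin> D' \<Longrightarrow> r1 \<notin> D \<and> x' = x" using D2[of r1] r by (simp add: ofs_def)
  show "r2 \<notin> D' \<Longrightarrow> r2 \<notin> D \<and> y' = y" using D2[of r2] r by (simp add: ofs_def)
  show "r3 \<notin> D' \<Longrightarrow> r3 \<notin> D \<and> w' = w" using D2[of r3] r by (simp add: ofs_def)
qed

lemma phi_inj: assumes "bnd K u" "bnd K v" "phi u = phi v" shows "u = v"
proof (cases u)
  case (T x y w)
  then show ?thesis using assms r
    by (cases v) (auto dest: Z_ofs_eq[of x y w "{}"])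
next
  case (PXY x y)
  then show ?thesis using assms r Kpos
    by (cases v) (auto dest: Z_ofs_eq[of x y 0 "{r3}"])
next
  case (PXW x w)
  then show ?thesis using assms r Kpos
    by (cases v) (auto dest: Z_ofs_eq[of x 0 w "{r2}"])
next
  case (PYW y w)
  then show ?thesis using assms r Kpos
    by (cases v) (auto dest: Z_ofs_eq[of 0 y w "{r1}"])
qed

lemma phi_adj:
  assumes edge: "\<And>f r. bd f \<Longrightarrow> r \<in> {r1, r2, r3} \<Longrightarrow> {Z f {}, Z f {r}} \<in> G"
    and "adjV u v" "bnd K u" "bnd K v"
  shows "{phi u, phi v} \<in> G"
proof -
  have key: "{phi (T x y w), phi v'} \<in> G"
    if "v' = PXY x y \<or> v' = PXW x w \<or> v' = PYW y w" "x < K" "y < K" "w < K" for x y w v'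
  proof -
    have b: "bd (ofs x y w)" using bd_ofs that by blast
    have e1: "Z (ofs x y 0) {r3} = Z (ofs x y w) {r3}" "Z (ofs x 0 w) {r2} = Z (ofs x y w) {r2}"
      "Z (ofs 0 y w) {r1} = Z (ofs x y w) {r1}"
      using r by (auto intro!: Z_cong simp: ofs_def split: if_split_asm)
    show ?thesis using that e1 edge[OF b] by auto
  qed
  from assms(2) obtain x y w where
    "(u = T x y w \<and> (v = PXY x y \<or> v = PXW x w \<or> v = PYW y w))
      \<or> (v = T x y w \<and> (u = PXY x y \<or> u = PXW x w \<or> u = PYW y w))"
    unfolding adjV_def by blast
  then show ?thesis
  proof
    assume a: "u = T x y w \<and> (v = PXY x y \<or> v = PXW x w \<or> v = PYW y w)"
    then show ?thesis using key[of v x y w] assms(3) by auto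
  next
    assume a: "v = T x y w \<and> (u = PXY x y \<or> u = PXW x w \<or> u = PYW y w)"
    then show ?thesis using key[of u x y w] assms(4) by (auto simp: insert_commute)
  qed
qed

end


lemma code_lt: "(\<forall>r<s. a r < (t::nat)) \<Longrightarrow> (\<Sum>r<s. a r * t^r) < t^s"
proof (induction s)
  case 0 then show ?case by simp
next
  case (Suc s)
  then have "(\<Sum>r<Suc s. a r * t^r) < t^s + a s * t^s" by simp
  also have "\<dots> = (a s + 1) * t^s" by simp
  also have "\<dots> \<le> t * t^s" using Suc.prems by (intro mult_right_mono) auto
  finally show ?case by simp
qed

lemma digit: "(\<forall>q<s. a q < (t::nat)) \<Longrightarrow> r < s \<Longrightarrow> (\<Sum>q<s. a q * t^q) div t^r mod t = a r"
proof (induction s arbitrary: a r)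
  case 0 then show ?case by simp
next
  case (Suc s)
  have eq: "(\<Sum>q<Suc s. a q * t^q) = a 0 + t * (\<Sum>q<s. a (Suc q) * t^q)"
    unfolding sum.lessThan_Suc_shift by (simp add: sum_distrib_left mult_ac)
  have a0: "a 0 < t" using Suc.prems by auto
  show ?case
  proof (cases r)
    case 0 then show ?thesis using eq a0 by simp
  next
    case (Suc r')
    have "(a 0 + t * (\<Sum>q<s. a (Suc q) * t^q)) div t = (\<Sum>q<s. a (Suc q) * t^q)"
      using a0 by simp
    then have X: "(\<Sum>q<Suc s. a q * t^q) div t = (\<Sum>q<s. a (Suc q) * t^q)"
      using eq by simp
    have "(\<Sum>q<Suc s. a q * t^q) div t^r = ((\<Sum>q<Suc s. a q * t^q) div t) div t^r'"
      by (simp only: \<open>r = Suc r'\<close> power_Suc div_mult2_eq)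
    then have "(\<Sum>q<Suc s. a q * t^q) div t^r = (\<Sum>q<s. a (Suc q) * t^q) div t^r'"
      using X by simp
    moreover have "(\<Sum>q<s. a (Suc q) * t^q) div t^r' mod t = a (Suc r')"
      using Suc.IH[of "\<lambda>q. a (Suc q)" r'] Suc.prems \<open>r = Suc r'\<close> by auto
    ultimately show ?thesis using Suc by simp
  qed
qed

lemma three_elems: assumes "finite A" "card A \<ge> 3"
  obtains a b c where "a \<in> A" "b \<in> A" "c \<in> A" "a \<noteq> b" "a \<noteq> c" "b \<noteq> c"
proof -
  have "A \<noteq> {}" using assms by auto
  then obtain a where a: "a \<in> A" by blast
  have "card (A - {a}) \<ge> 2" using assms a by simp
  then have "A - {a} \<noteq> {}" by (metis card.empty not_numeral_le_zero)
  then obtain b where b: "b \<in> A - {a}" by blast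
  have "card (A - {a} - {b}) \<ge> 1" using assms a b by (simp add: card_Diff_subset)
  then have "A - {a} - {b} \<noteq> {}" by (metis card.empty not_one_le_zero)
  then obtain c where c: "c \<in> A - {a} - {b}" by blast
  show ?thesis using that a b c by blast
qed

lemma pigeon3: assumes "\<forall>r<2*t+1. g r < (t::nat)"
  obtains r1 r2 r3 where "r1 < 2*t+1" "r2 < 2*t+1" "r3 < 2*t+1" "r1 \<noteq> r2" "r1 \<noteq> r3" "r2 \<noteq> r3"
    "g r2 = g r1" "g r3 = g r1"
proof -
  have "\<exists>j<t. card {r. r < 2*t+1 \<and> g r = j} \<ge> 3"
  proof (rule ccontr)
    assume "\<not> ?thesis"
    then have le: "\<forall>j<t. card {r. r < 2*t+1 \<and> g r = j} \<le> 2" by auto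
    have "{..<2*t+1} = (\<Union>j<t. {r. r < 2*t+1 \<and> g r = j})" using assms by auto
    then have "card {..<2*t+1} \<le> (\<Sum>j<t. card {r. r < 2*t+1 \<and> g r = j})"
      using card_UN_le[of "{..<t}" "\<lambda>j. {r. r < 2*t+1 \<and> g r = j}"] by simp
    also have "\<dots> \<le> (\<Sum>j<t. 2)" using le by (intro sum_mono) auto
    finally show False by simp
  qed
  then obtain j where cj: "card {r. r < 2*t+1 \<and> g r = j} \<ge> 3" by blast
  have fin: "finite {r. r < 2*t+1 \<and> g r = j}" by simp
  obtain a b c where abc: "a \<in> {r. r < 2*t+1 \<and> g r = j}" "b \<in> {r. r < 2*t+1 \<and> g r = j}"
    "c \<in> {r. r < 2*t+1 \<and> g r = j}" "a \<noteq> b" "a \<noteq> c" "b \<noteq> c"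
    using three_elems[OF fin cj] by blast
  show ?thesis by (rule that[of a b c]) (use abc in auto)
qed



lemma min_lt: "0 < t \<Longrightarrow> min a (t-1) < (t::nat)" using min.cobounded2[of a "t-1"] by linarith

theorem theorem1p3:
  fixes t l :: nat
  assumes "t > 0" and "l \<ge> 6"
  shows "\<exists>k0. \<forall>k\<ge>k0. \<forall>c :: nat set set \<Rightarrow> nat.
           (\<forall>e\<in>doubled_odd_edges k. c e < t) \<longrightarrow>
           (\<exists>j<t. has_cycle_of_length {e \<in> doubled_odd_edges k. c e = j} (2 * l))"
proof -
  define s where "s = 2*t+1"
  define K where "K = l"
  define M where "M = s*K"
  obtain N :: nat where N: "partn_lst {..<N} (replicate (t^s) M) s" using ramsey_full[of "replicate (t^s) M" s] by blast
  show ?thesis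
  proof (rule exI[of _ "N+s"], intro allI impI)
    fix k and c :: "nat set set \<Rightarrow> nat"
    assume k: "N + s \<le> k" and col: "\<forall>e\<in>doubled_odd_edges k. c e < t"
    define F where "F = {Suc N..<Suc N + (k+1-s)}"
    define cf where "cf Y r = c {F \<union> Suc ` Y, F \<union> Suc ` (Y - {sorted_list_of_set Y ! r})}" for Y r
    define fr where "fr Y = (\<Sum>r<s. min (cf Y r) (t-1) * t^r)" for Y
    have fr_in: "fr \<in> nsets {..<N} s \<rightarrow> {..<length (replicate (t^s) M)}"
    proof
      fix Y show "fr Y \<in> {..<length (replicate (t^s) M)}"
        unfolding fr_def using code_lt[of s "\<lambda>r. min (cf Y r) (t-1)" t] min_lt[OF assms(1)] by auto
    qed
    obtain i H where i: "i < length (replicate (t^s) M)"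
      and H: "H \<in> nsets {..<N} (replicate (t^s) M ! i)" and hom: "fr ` nsets H s \<subseteq> {i}"
      using partn_lstE[OF N fr_in refl] by blast
    have H': "H \<subseteq> {..<N}" "finite H" "card H = M" using H i by (auto simp: nsets_def)
    define g where "g r = i div t^r mod t" for r
    have hom': "min (cf Y r) (t-1) = g r" if "Y \<in> nsets H s" "r < s" for Y r
    proof -
      have "fr Y = i" using hom that by blast
      then show ?thesis unfolding g_def fr_def
        using digit[of s "\<lambda>r. min (cf Y r) (t-1)" t r] that min_lt[OF assms(1)] by auto
    qed
    have "\<forall>r<2*t+1. g r < t" using assms(1) by (simp add: g_def)
    then obtain r1 r2 r3 where r: "r1 < s" "r2 < s" "r3 < s" "r1 \<noteq> r2" "r1 \<noteq> r3" "r2 \<noteq> r3"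
      and gr: "g r2 = g r1" "g r3 = g r1"
      using pigeon3[of t g] unfolding s_def by metis
    define j where "j = g r1"
    have jt: "j < t" using assms(1) by (simp add: j_def g_def)
    define h where "h q = sorted_list_of_set H ! q" for q
    have hs: "strict_sorted (sorted_list_of_set H)" "length (sorted_list_of_set H) = M"
      "set (sorted_list_of_set H) = H"
      using H' by auto
    have hmono: "h q < h q'" if "q < q'" "q' < M" for q q'
      using hs that sorted_wrt_nth_less unfolding h_def by fastforce
    have hH: "h q \<in> H" if "q < M" for q
      using hs that unfolding h_def by (metis nth_mem)
    have hinj: "inj_on h {..<s*K}"
    proof (rule inj_onI)
      fix q q' assume "q \<in> {..<s*K}" "q' \<in> {..<s*K}" "h q = h q'"
      then show "q = q'" using hmono[of q q'] hmono[of q' q] unfolding M_def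
        by (metis lessThan_iff linorder_neqE_nat less_irrefl)
    qed
    have hN: "h q < N" if "q < s*K" for q using hH H' that unfolding M_def by auto
    have Kpos: "K > 0" using assms(2) K_def by simp
    interpret E: emb h K s r1 r2 r3 F
    proof
      show "inj_on h {..<s*K}" by (fact hinj)
      show "\<And>q. q < s*K \<Longrightarrow> Suc (h q) \<notin> F" using hN unfolding F_def by fastforce
    qed (use r Kpos F_def in auto)
    have edge: "{E.Z f {}, E.Z f {r}} \<in> {e \<in> doubled_odd_edges k. c e = j}"
      if f: "E.bd f" and rr: "r \<in> {r1, r2, r3}" for f r
    proof -
      have rs: "r < s" using rr r by auto
      define hh where "hh q = h (q*K + f q)" for q
      have idx: "q*K + f q < q'*K + f q'" if "q < q'" "q' < s" for q q'
      proof -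
        have "q*K + f q < q*K + K" using f that unfolding E.bd_def by auto
        also have "\<dots> = (q+1)*K" by simp
        also have "\<dots> \<le> q'*K" using that by (intro mult_right_mono) auto
        finally show ?thesis by simp
      qed
      have hhmono: "hh q < hh q'" if "q < q'" "q' < s" for q q'
        unfolding hh_def using idx[OF that] idx_lt[of q' s "f q'" K] that f hmono
        unfolding E.bd_def M_def by auto
      define L where "L = map hh [0..<s]"
      define Y where "Y = hh ` {..<s}"
      have Lsorted: "strict_sorted L"
        unfolding L_def sorted_wrt_iff_nth_less using hhmono by auto
      have setL: "set L = Y" unfolding L_def Y_def by auto
      have distL: "distinct L" using Lsorted strict_sorted_iff by blast
      have cardY: "card Y = s" using distL setL distinct_card[of L] unfolding L_def by simp
      have sl: "sorted_list_of_set Y = L"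
        using sorted_list_of_set_unique[of Y L] Lsorted setL cardY unfolding Y_def L_def by auto
      have slr: "sorted_list_of_set Y ! r = hh r" using sl rs unfolding L_def by simp
      have YH: "Y \<in> nsets H s"
        unfolding nsets_def Y_def using cardY hH idx_lt f unfolding Y_def hh_def E.bd_def M_def
        by auto
      have Z0: "F \<union> Suc ` Y = E.Z f {}" unfolding E.Z_def Y_def hh_def by (auto simp: image_image)
      have Zr: "F \<union> Suc ` (Y - {hh r}) = E.Z f {r}"
      proof -
        have "Y - {hh r} = hh ` ({..<s} - {r})"
          unfolding Y_def using hhmono rs by (auto, metis linorder_neqE_nat less_irrefl)
        then show ?thesis unfolding E.Z_def hh_def by (auto simp: image_image)
      qed
      have cfY: "cf Y r = c {E.Z f {}, E.Z f {r}}" unfolding cf_def slr Z0 Zr ..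
      have cardF: "card F = k + 1 - s" unfolding F_def by simp
      have sub: "E.Z f D \<subseteq> {1..2*k+1}" for D
      proof -
        have "F \<subseteq> {1..2*k+1}" unfolding F_def using k by auto
        moreover have "Suc (h (q*K + f q)) \<in> {1..2*k+1}" if "q < s" for q
          using hN[of "q*K + f q"] idx_lt[of q s "f q" K] that f k unfolding E.bd_def by auto
        ultimately show ?thesis unfolding E.Z_def by auto
      qed
      have c0: "card (E.Z f {}) = k + 1" using E.card_Z[of "{}" f] f cardF k by simp
      have c1: "card (E.Z f {r}) = k" using E.card_Z[of "{r}" f] f cardF k rs by simp
      have ps: "E.Z f {r} \<subset> E.Z f {}" using E.Z_psubset rs f by blast
      have ed: "{E.Z f {}, E.Z f {r}} \<in> doubled_odd_edges k"
        unfolding doubled_odd_edges_def dj_edges_def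
      proof -
        have "{E.Z f {}, E.Z f {r}} = {E.Z f {r}, E.Z f {}}" by (rule insert_commute)
        then show "{E.Z f {}, E.Z f {r}} \<in> {{A, B} |A B. A \<subseteq> {1..2 * k + 1} \<and> B \<subseteq> {1..2 * k + 1} \<and>
                      card A = k \<and> card B = k + 1 \<and> A \<subset> B}"
          using sub c0 c1 ps by blast
      qed
      then have "c {E.Z f {}, E.Z f {r}} < t" using col by blast
      then have "c {E.Z f {}, E.Z f {r}} = g r" using hom'[OF YH rs] cfY by simp
      then show ?thesis using ed rr gr unfolding j_def by auto
    qed
    define p where "p = l - 3"
    have p3: "p \<ge> 3" "2*p+6 = 2*l" "p + 3 = K" using assms(2) unfolding p_def K_def by auto
    have "has_cycle_of_length {e \<in> doubled_odd_edges k. c e = j} (2*l)"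
    proof (rule cycle_transfer[of _ "\<lambda>i. E.phi (cyc p i)"])
      show "3 \<le> 2*l" using assms by simp
      show "inj_on (\<lambda>i. E.phi (cyc p i)) {..<2 * l}"
      proof (rule inj_onI)
        fix a b assume ab: "a \<in> {..<2*l}" "b \<in> {..<2*l}" "E.phi (cyc p a) = E.phi (cyc p b)"
        have "cyc p a = cyc p b"
          by (rule E.phi_inj[OF _ _ ab(3)]) (use bnd_cyc[OF p3(1)] p3(3) in auto)
        then show "a = b" using inj_onD[OF inj_cyc[OF p3(1)]] ab p3(2) by auto
      qed
      show "\<forall>i<2*l. {E.phi (cyc p i), E.phi (cyc p ((i + 1) mod (2*l)))} \<in> {e \<in> doubled_odd_edges k. c e = j}"
      proof (intro allI impI)
        fix i assume "i < 2*l"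
        then have adj: "adjV (cyc p i) (cyc p ((i+1) mod (2*l)))" using adj_cyc[OF p3(1), of i] p3 by simp
        then show "{E.phi (cyc p i), E.phi (cyc p ((i + 1) mod (2*l)))} \<in> {e \<in> doubled_odd_edges k. c e = j}"
          using E.phi_adj[OF edge adj] bnd_cyc[OF p3(1)] p3(3) by simp
      qed
    qed
    then show "\<exists>j<t. has_cycle_of_length {e \<in> doubled_odd_edges k. c e = j} (2 * l)"
      using jt by blast
  qed
qed

end
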